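(* Let $X$ be a compact metric space and $(f_n)_{n\ge1}$ a sequence of continuous maps $X\to X$ converging uniformly to a function $\phi\colon X\to X$. Let $p\in\mathbb{N}^*$ and $x\in X$. Then $f_1^p(x)$ is a periodic point of $\phi$ if and only if there is a positive integer $n$ such that $f_1^p(x)=f_1^{p+n}(x)$.
   Context: $\mathbb{N}=\{1,2,\dots\}$, $\mathbb{N}^*$ the free ultrafilters on $\mathbb{N}$. For $r\in\mathbb{N}^*$, $r\text{-}\lim_m x_m$ is the unique $y$ with $\{m:x_m\in V\}\in r$ for all neighbourhoods $V$ of $y$. $f_1^m=f_m\circ\cdots\circ f_1$, $f_1^r(x)=r\text{-}\lim_m f_1^m(x)$ for $r\in\mathbb{N}^*$; $p+n=\{A:\{m:m+n\in A\}\in p\}$. A point $y$ is a periodic point of $\phi$ if $\phi^n(y)=y$ for some positive integer $n$. *)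

theory Defs
  imports "HOL-Analysis.Analysis"
begin

definition ultrafilter_on_nat :: "nat set set \<Rightarrow> bool" where
  "ultrafilter_on_nat U \<longleftrightarrow>
     {} \<notin> U \<and> UNIV \<in> U \<and>
     (\<forall>A B. A \<in> U \<and> B \<in> U \<longrightarrow> A \<inter> B \<in> U) \<and>
     (\<forall>A B. A \<in> U \<and> A \<subseteq> B \<longrightarrow> B \<in> U) \<and>
     (\<forall>A. A \<in> U \<or> - A \<in> U)"

text \<open>Free ultrafilters: no finite member (the elements of N^*).\<close>
definition free_ultrafilter_nat :: "nat set set \<Rightarrow> bool" where
  "free_ultrafilter_nat U \<longleftrightarrow> ultrafilter_on_nat U \<and> (\<forall>A\<in>U. infinite A)"

definition uf_shift :: "nat set set \<Rightarrow> nat \<Rightarrow> nat set set" where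
  "uf_shift p n = {A. {m. m + n \<in> A} \<in> p}"

definition uf_lim :: "'a::metric_space set \<Rightarrow> nat set set \<Rightarrow> (nat \<Rightarrow> 'a) \<Rightarrow> 'a" where
  "uf_lim X r s = (THE y. y \<in> X \<and> (\<forall>V. open V \<longrightarrow> y \<in> V \<longrightarrow> {m. s m \<in> V} \<in> r))"

fun comp_seq :: "(nat \<Rightarrow> 'a \<Rightarrow> 'a) \<Rightarrow> nat \<Rightarrow> 'a \<Rightarrow> 'a" where
  "comp_seq f 0 = id"
| "comp_seq f (Suc m) = f (Suc m) \<circ> comp_seq f m"

definition comp_uf :: "'a::metric_space set \<Rightarrow> (nat \<Rightarrow> 'a \<Rightarrow> 'a) \<Rightarrow> nat set set \<Rightarrow> 'a \<Rightarrow> 'a" where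
  "comp_uf X f r x = uf_lim X r (\<lambda>m. comp_seq f m x)"

definition periodic_point :: "('a \<Rightarrow> 'a) \<Rightarrow> 'a \<Rightarrow> bool" where
  "periodic_point \<phi> y \<longleftrightarrow> (\<exists>n>0. (\<phi> ^^ n) y = y)"

end

theory Submission
  imports Defs
begin

definition ufF :: "nat set set \<Rightarrow> nat filter" where
  "ufF U = Abs_filter (\<lambda>P. {m. P m} \<in> U)"

lemma eventually_ufF:
  assumes "ultrafilter_on_nat U"
  shows "eventually P (ufF U) \<longleftrightarrow> {m. P m} \<in> U"
proof -
  have "is_filter (\<lambda>P. {m. P m} \<in> U)"
  proof
    show "{m. True} \<in> U" using assms by (simp add: ultrafilter_on_nat_def)
  next
    fix P Q assume "{m. P m} \<in> U" "{m. Q m} \<in> U"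
    then have "{m. P m} \<inter> {m. Q m} \<in> U" using assms by (simp add: ultrafilter_on_nat_def)
    then show "{m. P m \<and> Q m} \<in> U" by (simp add: Collect_conj_eq)
  next
    fix P Q assume "\<forall>x. P x \<longrightarrow> Q x" "{m. P m} \<in> U"
    then show "{m. Q m} \<in> U" using assms unfolding ultrafilter_on_nat_def
      by (metis (mono_tags, lifting) mem_Collect_eq subsetI)
  qed
  then show ?thesis unfolding ufF_def by (simp add: eventually_Abs_filter)
qed

lemma ufF_nontriv:
  assumes "ultrafilter_on_nat U"
  shows "ufF U \<noteq> bot"
proof
  assume "ufF U = bot"
  then have "eventually (\<lambda>_. False) (ufF U)" by simp
  then show False using assms by (simp add: eventually_ufF ultrafilter_on_nat_def)
qed

lemma tendsto_ufF:
  assumes "ultrafilter_on_nat U"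
  shows "(s \<longlongrightarrow> y) (ufF U) \<longleftrightarrow> (\<forall>V. open V \<longrightarrow> y \<in> V \<longrightarrow> {m. s m \<in> V} \<in> U)"
  by (simp add: tendsto_def eventually_ufF[OF assms])

lemma ufF_lim_exists:
  fixes s :: "nat \<Rightarrow> 'a::metric_space"
  assumes U: "ultrafilter_on_nat U" and X: "compact X" and s: "\<And>m. s m \<in> X"
  shows "\<exists>y\<in>X. (s \<longlongrightarrow> y) (ufF U)"
proof (rule ccontr)
  assume "\<not> ?thesis"
  then have "\<forall>y\<in>X. \<exists>V. open V \<and> y \<in> V \<and> {m. s m \<in> V} \<notin> U"
    by (simp add: tendsto_ufF[OF U])
  then obtain V where V: "\<And>y. y \<in> X \<Longrightarrow> open (V y) \<and> y \<in> V y \<and> {m. s m \<in> V y} \<notin> U"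
    by metis
  have "X \<subseteq> (\<Union>y\<in>X. V y)" using V by blast
  then obtain K where K: "K \<subseteq> X" "finite K" "X \<subseteq> (\<Union>y\<in>K. V y)"
    using compactE_image[OF X, of X V] V by metis
  have "{m. \<forall>y\<in>K. s m \<notin> V y} \<in> U" using K(2,1)
  proof (induction K rule: finite_induct)
    case empty then show ?case using U by (simp add: ultrafilter_on_nat_def)
  next
    case (insert a K)
    have "{m. s m \<in> V a} \<notin> U" using V insert by auto
    then have "- {m. s m \<in> V a} \<in> U" using U unfolding ultrafilter_on_nat_def by blast
    moreover have "{m. \<forall>y\<in>K. s m \<notin> V y} \<in> U" using insert by auto
    ultimately have "- {m. s m \<in> V a} \<inter> {m. \<forall>y\<in>K. s m \<notin> V y} \<in> U"
      using U unfolding ultrafilter_on_nat_def by blast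
    moreover have "- {m. s m \<in> V a} \<inter> {m. \<forall>y\<in>K. s m \<notin> V y} = {m. \<forall>y\<in>insert a K. s m \<notin> V y}"
      by auto
    ultimately show ?case by simp
  qed
  moreover have "{m. \<forall>y\<in>K. s m \<notin> V y} = {}" using K(3) s by blast
  ultimately show False using U by (simp add: ultrafilter_on_nat_def)
qed

lemma uf_lim_eq:
  fixes s :: "nat \<Rightarrow> 'a::metric_space"
  assumes U: "ultrafilter_on_nat U" and y: "y \<in> X" "(s \<longlongrightarrow> y) (ufF U)"
  shows "uf_lim X U s = y"
  unfolding uf_lim_def
proof (rule the_equality)
  show "y \<in> X \<and> (\<forall>V. open V \<longrightarrow> y \<in> V \<longrightarrow> {m. s m \<in> V} \<in> U)"
    using y tendsto_ufF[OF U] by blast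
next
  fix z assume "z \<in> X \<and> (\<forall>V. open V \<longrightarrow> z \<in> V \<longrightarrow> {m. s m \<in> V} \<in> U)"
  then have "(s \<longlongrightarrow> z) (ufF U)" using tendsto_ufF[OF U] by blast
  then show "z = y" using tendsto_unique[OF ufF_nontriv[OF U]] y(2) by blast
qed

lemma uf_lim_shift: "uf_lim X (uf_shift p n) s = uf_lim X p (\<lambda>m. s (m + n))"
  by (simp add: uf_lim_def uf_shift_def)

lemma ufF_at_top:
  assumes "free_ultrafilter_nat p"
  shows "eventually (\<lambda>m. N \<le> m) (ufF p)"
proof -
  have U: "ultrafilter_on_nat p" using assms by (simp add: free_ultrafilter_nat_def)
  have "{..<N} \<notin> p" using assms by (auto simp: free_ultrafilter_nat_def)
  then have "- {..<N} \<in> p" using U unfolding ultrafilter_on_nat_def by blast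
  moreover have "- {..<N} = {m. N \<le> m}" by auto
  ultimately show ?thesis by (simp add: eventually_ufF[OF U])
qed

lemma compose_uniform:
  fixes g :: "nat \<Rightarrow> 'a::metric_space"
  assumes g: "(g \<longlongrightarrow> z) F" "z \<in> X" "\<And>m. g m \<in> X"
    and k: "filterlim k sequentially F"
    and ul: "uniform_limit X f \<phi> sequentially"
    and c: "continuous_on X \<phi>"
  shows "((\<lambda>m. f (k m) (g m)) \<longlongrightarrow> \<phi> z) F"
proof (rule tendstoI)
  fix e :: real assume e: "e > 0"
  have "\<forall>\<^sub>F n in sequentially. \<forall>x\<in>X. dist (f n x) (\<phi> x) < e/2"
    using uniform_limitD[OF ul, of "e/2"] e by simp
  then have 1: "\<forall>\<^sub>F m in F. \<forall>x\<in>X. dist (f (k m) x) (\<phi> x) < e/2"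
    by (rule filterlim_iff[THEN iffD1, OF k, rule_format])
  have gl: "((\<lambda>m. \<phi> (g m)) \<longlongrightarrow> \<phi> z) F"
    using continuous_on_tendsto_compose[OF c g(1) g(2)] g(3) by simp
  have 2: "\<forall>\<^sub>F m in F. dist (\<phi> (g m)) (\<phi> z) < e/2"
    using tendstoD[OF gl, of "e/2"] e by simp
  show "\<forall>\<^sub>F m in F. dist (f (k m) (g m)) (\<phi> z) < e"
    using 1 2
  proof eventually_elim
    case (elim m)
    have "dist (f (k m) (g m)) (\<phi> z) \<le> dist (f (k m) (g m)) (\<phi> (g m)) + dist (\<phi> (g m)) (\<phi> z)"
      by (rule dist_triangle)
    also have "\<dots> < e"
    proof -
      have "dist (f (k m) (g m)) (\<phi> (g m)) < e/2" using elim(1) g(3)[of m] by blast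
      then show ?thesis using elim(2) by linarith
    qed
    finally show ?case .
  qed
qed

theorem corollary3p14:
  fixes X :: "'a::metric_space set"
    and f :: "nat \<Rightarrow> 'a \<Rightarrow> 'a"
    and \<phi> :: "'a \<Rightarrow> 'a"
    and p :: "nat set set"
    and x :: 'a
  assumes "compact X"
    and "\<And>n. n \<ge> 1 \<Longrightarrow> continuous_on X (f n)"
    and "\<And>n. n \<ge> 1 \<Longrightarrow> f n ` X \<subseteq> X"
    and "\<phi> ` X \<subseteq> X"
    and "uniform_limit X f \<phi> sequentially"
    and "free_ultrafilter_nat p"
    and "x \<in> X"
  shows "periodic_point \<phi> (comp_uf X f p x) \<longleftrightarrow>
         (\<exists>n::nat. n > 0 \<and> comp_uf X f p x = comp_uf X f (uf_shift p n) x)"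
proof -
  have U: "ultrafilter_on_nat p" using assms(6) by (simp add: free_ultrafilter_nat_def)
  define s where "s m = comp_seq f m x" for m
  have sX: "s m \<in> X" for m
    unfolding s_def using assms(3,7) by (induction m) auto
  have "\<exists>y\<in>X. (s \<longlongrightarrow> y) (ufF p)" by (rule ufF_lim_exists[OF U assms(1) sX])
  then obtain y where y: "y \<in> X" "(s \<longlongrightarrow> y) (ufF p)" by (elim bexE)
  have cphi: "continuous_on X \<phi>"
    by (rule uniform_limit_theorem[OF _ assms(5)])
       (auto intro: eventually_sequentiallyI[of 1] assms(2))
  have main: "((\<lambda>m. s (m + n)) \<longlongrightarrow> (\<phi> ^^ n) y) (ufF p) \<and> (\<phi> ^^ n) y \<in> X" for n
  proof (induction n)
    case 0 then show ?case using y by simp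
  next
    case (Suc n)
    have k: "filterlim (\<lambda>m. Suc (m + n)) sequentially (ufF p)"
      unfolding filterlim_at_top
    proof
      fix Z
      show "\<forall>\<^sub>F m in ufF p. Z \<le> Suc (m + n)"
        using ufF_at_top[OF assms(6), of Z] by (rule eventually_mono) simp
    qed
    have "((\<lambda>m. f (Suc (m + n)) (s (m + n))) \<longlongrightarrow> \<phi> ((\<phi> ^^ n) y)) (ufF p)"
      using compose_uniform[OF conjunct1[OF Suc] conjunct2[OF Suc] sX k assms(5) cphi] .
    moreover have "s (m + Suc n) = f (Suc (m + n)) (s (m + n))" for m
      by (simp add: s_def)
    ultimately show ?case using Suc assms(4) by auto
  qed
  have y_eq: "comp_uf X f p x = y"
  proof -
    have "(\<lambda>m. comp_seq f m x) = s" by (simp add: s_def fun_eq_iff)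
    then show ?thesis unfolding comp_uf_def using uf_lim_eq[OF U y] by simp
  qed
  have sh: "comp_uf X f (uf_shift p n) x = (\<phi> ^^ n) y" for n
    unfolding comp_uf_def uf_lim_shift
    using uf_lim_eq[OF U, of "(\<phi> ^^ n) y" X "\<lambda>m. s (m + n)"] main[of n]
    by (simp add: s_def)
  show ?thesis unfolding y_eq sh periodic_point_def by auto
qed

end
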